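(* Let $k\in\{1,2\}$, $\xi\in\mathbb{C}$, $f:\mathbb{N}\to[0,\infty)$, and $A=\xi(a^\dagger)^k+\xi^*a^k+f(a^\dagger a)$ with domain $\mathcal{D}_0$. Suppose there exists $C>0$ such that $f(n)\le C\beta^{k0}_n$ for all $n\in\mathbb{N}$. Then $A$ is essentially self-adjoint.
   Context: $\mathbb{N}=\{0,1,2,\dots\}$. $\mathcal{H}$ is a separable complex Hilbert space with orthonormal basis $(\phi_n)_{n\in\mathbb{N}}$; $\mathcal{D}_0$ is the set of finite linear combinations of the $\phi_n$. The operators $a,a^\dagger$ have domain $\mathcal{D}_0$ and act by $a\phi_n=\sqrt{n}\,\phi_{n-1}$ ($a\phi_0=0$), $a^\dagger\phi_n=\sqrt{n+1}\,\phi_{n+1}$, extended linearly. $f(a^\dagger a)$ has domain $\mathcal{D}_0$ and $f(a^\dagger a)\phi_n=f(n)\phi_n$. For integers $x\ge1$ and $s\ge0$, $(x,s)=x(x+1)\cdots(x+s-1)$; $\beta^{k0}_n=\sqrt{(n+1,k)}$ (the case $l=0$ of $\beta^{kl}_n=\sqrt{(n-l+1,l)(n-l+1,k)}$). *)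

theory Defs
  imports Complex_Main
begin

text \<open>The Hilbert space H with orthonormal basis phi_n is realised (up to the
unitary identification phi_n = n-th unit vector) as l2(N): vectors are coefficient
sequences nat => complex that are square summable.\<close>

definition l2 :: "(nat \<Rightarrow> complex) set" where
  "l2 = {x. summable (\<lambda>n. (cmod (x n))^2)}"

definition ip :: "(nat \<Rightarrow> complex) \<Rightarrow> (nat \<Rightarrow> complex) \<Rightarrow> complex" where
  "ip x y = (\<Sum>n. cnj (x n) * y n)"

definition l2dist :: "(nat \<Rightarrow> complex) \<Rightarrow> (nat \<Rightarrow> complex) \<Rightarrow> real" where
  "l2dist x y = sqrt (\<Sum>n. (cmod (x n - y n))^2)"

text \<open>D0: finite linear combinations of the basis vectors.\<close>
definition D0 :: "(nat \<Rightarrow> complex) set" where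
  "D0 = {x. finite {n. x n \<noteq> 0}}"

text \<open>Annihilation a phi_n = sqrt n phi_(n-1), creation a^dag phi_n = sqrt(n+1) phi_(n+1),
written on coefficients.\<close>
definition ann :: "(nat \<Rightarrow> complex) \<Rightarrow> (nat \<Rightarrow> complex)" where
  "ann x = (\<lambda>n. complex_of_real (sqrt (real (n + 1))) * x (n + 1))"

definition cre :: "(nat \<Rightarrow> complex) \<Rightarrow> (nat \<Rightarrow> complex)" where
  "cre x = (\<lambda>n. if n = 0 then 0 else complex_of_real (sqrt (real n)) * x (n - 1))"

text \<open>f(a^dag a) phi_n = f(n) phi_n.\<close>
definition numop :: "(nat \<Rightarrow> real) \<Rightarrow> (nat \<Rightarrow> complex) \<Rightarrow> (nat \<Rightarrow> complex)" where
  "numop f x = (\<lambda>n. complex_of_real (f n) * x n)"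

definition opA :: "nat \<Rightarrow> complex \<Rightarrow> (nat \<Rightarrow> real) \<Rightarrow> (nat \<Rightarrow> complex) \<Rightarrow> (nat \<Rightarrow> complex)" where
  "opA k xi f x = (\<lambda>n. xi * (cre ^^ k) x n + cnj xi * (ann ^^ k) x n + numop f x n)"

text \<open>beta^{k0}_n = sqrt((n+1,k)), with (x,s) = x(x+1)...(x+s-1) the Pochhammer symbol.\<close>
definition beta_k0 :: "nat \<Rightarrow> nat \<Rightarrow> real" where
  "beta_k0 k n = sqrt (pochhammer (real (n + 1)) k)"

definition graph_of :: "(nat \<Rightarrow> complex) set \<Rightarrow> ((nat \<Rightarrow> complex) \<Rightarrow> (nat \<Rightarrow> complex))
    \<Rightarrow> ((nat \<Rightarrow> complex) \<times> (nat \<Rightarrow> complex)) set" where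
  "graph_of D T = {(x, T x) | x. x \<in> D}"

definition graph_closure :: "((nat \<Rightarrow> complex) \<times> (nat \<Rightarrow> complex)) set
    \<Rightarrow> ((nat \<Rightarrow> complex) \<times> (nat \<Rightarrow> complex)) set" where
  "graph_closure G = {(x, y). x \<in> l2 \<and> y \<in> l2 \<and>
      (\<exists>s. (\<forall>j. s j \<in> G) \<and> (\<lambda>j. l2dist (fst (s j)) x) \<longlonglongrightarrow> 0
                         \<and> (\<lambda>j. l2dist (snd (s j)) y) \<longlonglongrightarrow> 0)}"

definition graph_adjoint :: "((nat \<Rightarrow> complex) \<times> (nat \<Rightarrow> complex)) set
    \<Rightarrow> ((nat \<Rightarrow> complex) \<times> (nat \<Rightarrow> complex)) set" where
  "graph_adjoint G = {(y, z). y \<in> l2 \<and> z \<in> l2 \<and> (\<forall>(x, w) \<in> G. ip w y = ip x z)}"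

definition single_valued_graph :: "('a \<times> 'b) set \<Rightarrow> bool" where
  "single_valued_graph G \<longleftrightarrow> (\<forall>x y z. (x, y) \<in> G \<longrightarrow> (x, z) \<in> G \<longrightarrow> y = z)"

definition self_adjoint_graph :: "((nat \<Rightarrow> complex) \<times> (nat \<Rightarrow> complex)) set \<Rightarrow> bool" where
  "self_adjoint_graph G \<longleftrightarrow> single_valued_graph G \<and> graph_adjoint G = G"

definition essentially_self_adjoint :: "(nat \<Rightarrow> complex) set
    \<Rightarrow> ((nat \<Rightarrow> complex) \<Rightarrow> (nat \<Rightarrow> complex)) \<Rightarrow> bool" where
  "essentially_self_adjoint D T \<longleftrightarrow> D \<subseteq> l2 \<and> (\<forall>x\<in>D. T x \<in> l2) \<and>
     self_adjoint_graph (graph_closure (graph_of D T))"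

end

theory Submission
  imports Defs "HOL-Analysis.Analysis"
begin

lemma D0_l2: "x \<in> D0 \<Longrightarrow> x \<in> l2"
  unfolding D0_def l2_def
  using summable_finite[of "{n. x n \<noteq> 0}" "\<lambda>n. (cmod (x n))^2"] by auto

lemma D0_summable: "u \<in> D0 \<Longrightarrow> summable (\<lambda>n. cnj (u n) * x n)"
  unfolding D0_def by (rule summable_finite[of "{n. u n \<noteq> 0}"]) auto

lemma D0_summable': "u \<in> D0 \<Longrightarrow> summable (\<lambda>n. cnj (x n) * u n)"
  unfolding D0_def by (rule summable_finite[of "{n. u n \<noteq> 0}"]) auto

lemma D0_cre: "x \<in> D0 \<Longrightarrow> cre x \<in> D0"
proof -
  assume "x \<in> D0"
  hence fin: "finite {n. x n \<noteq> 0}" by (simp add: D0_def)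
  have "{n. cre x n \<noteq> 0} \<subseteq> Suc ` {n. x n \<noteq> 0}"
  proof
    fix n assume "n \<in> {n. cre x n \<noteq> 0}"
    hence "n \<noteq> 0" "x (n - 1) \<noteq> 0" by (auto simp: cre_def split: if_splits)
    thus "n \<in> Suc ` {n. x n \<noteq> 0}" by (intro image_eqI[of _ _ "n - 1"]) auto
  qed
  thus ?thesis using fin by (auto simp: D0_def intro: finite_subset)
qed

lemma D0_ann: "x \<in> D0 \<Longrightarrow> ann x \<in> D0"
proof -
  assume "x \<in> D0"
  hence fin: "finite {n. x n \<noteq> 0}" by (simp add: D0_def)
  have "{n. ann x n \<noteq> 0} \<subseteq> (\<lambda>n. n - 1) ` {n. x n \<noteq> 0}"
  proof
    fix n assume "n \<in> {n. ann x n \<noteq> 0}"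
    hence "x (n + 1) \<noteq> 0" by (auto simp: ann_def)
    thus "n \<in> (\<lambda>n. n - 1) ` {n. x n \<noteq> 0}" by (intro image_eqI[of _ _ "n + 1"]) auto
  qed
  thus ?thesis using fin by (auto simp: D0_def intro: finite_subset)
qed

lemma D0_funpow: "(\<And>x. x \<in> D0 \<Longrightarrow> T x \<in> D0) \<Longrightarrow> x \<in> D0 \<Longrightarrow> (T ^^ k) x \<in> D0"
  by (induction k) auto

lemma D0_lin: "p \<in> D0 \<Longrightarrow> q \<in> D0 \<Longrightarrow> r \<in> D0 \<Longrightarrow> (\<lambda>n. a * p n + b * q n + c n * r n) \<in> D0"
proof -
  assume "p \<in> D0" "q \<in> D0" "r \<in> D0"
  hence "finite ({n. p n \<noteq> 0} \<union> {n. q n \<noteq> 0} \<union> {n. r n \<noteq> 0})" by (simp add: D0_def)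
  moreover have "{n. a * p n + b * q n + c n * r n \<noteq> 0} \<subseteq> {n. p n \<noteq> 0} \<union> {n. q n \<noteq> 0} \<union> {n. r n \<noteq> 0}"
    by auto
  ultimately show ?thesis by (auto simp: D0_def intro: finite_subset)
qed

lemma D0_opA: "x \<in> D0 \<Longrightarrow> opA k xi f x \<in> D0"
  unfolding opA_def numop_def
  by (rule D0_lin) (auto intro: D0_funpow D0_cre D0_ann)

lemma l2_diff: "x \<in> l2 \<Longrightarrow> y \<in> l2 \<Longrightarrow> (\<lambda>n. x n - y n) \<in> l2"
  unfolding l2_def
proof (clarify)
  assume a: "summable (\<lambda>n. (cmod (x n))\<^sup>2)" "summable (\<lambda>n. (cmod (y n))\<^sup>2)"
  show "summable (\<lambda>n. (cmod (x n - y n))\<^sup>2)"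
  proof (rule summable_comparison_test[OF _ summable_add[OF summable_mult[OF a(1)] summable_mult[OF a(2)]]])
    show "\<exists>N. \<forall>n\<ge>N. norm ((cmod (x n - y n))\<^sup>2) \<le> 2 * (cmod (x n))\<^sup>2 + 2 * (cmod (y n))\<^sup>2"
    proof (intro exI allI impI)
      fix n
      have "cmod (x n - y n) \<le> cmod (x n) + cmod (y n)" by (rule norm_triangle_ineq4)
      hence "(cmod (x n - y n))\<^sup>2 \<le> (cmod (x n) + cmod (y n))\<^sup>2" by (simp add: power_mono)
      also have "\<dots> \<le> 2 * (cmod (x n))\<^sup>2 + 2 * (cmod (y n))\<^sup>2"
        using sum_squares_bound[of "cmod (x n)" "cmod (y n)"] by (simp add: power2_sum)
      finally show "norm ((cmod (x n - y n))\<^sup>2) \<le> 2 * (cmod (x n))\<^sup>2 + 2 * (cmod (y n))\<^sup>2" by simp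
    qed
  qed
qed

lemma l2_prod_summable: "x \<in> l2 \<Longrightarrow> y \<in> l2 \<Longrightarrow> summable (\<lambda>n. cmod (x n) * cmod (y n))"
  unfolding l2_def
proof (clarify)
  assume a: "summable (\<lambda>n. (cmod (x n))\<^sup>2)" "summable (\<lambda>n. (cmod (y n))\<^sup>2)"
  show "summable (\<lambda>n. cmod (x n) * cmod (y n))"
  proof (rule summable_comparison_test[OF _ summable_add[OF a]])
    show "\<exists>N. \<forall>n\<ge>N. norm (cmod (x n) * cmod (y n)) \<le> (cmod (x n))\<^sup>2 + (cmod (y n))\<^sup>2"
    proof (intro exI[of _ 0] allI impI)
      fix n
      show "norm (cmod (x n) * cmod (y n)) \<le> (cmod (x n))\<^sup>2 + (cmod (y n))\<^sup>2"
      proof -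
        have "0 \<le> cmod (x n) * cmod (y n)" by simp
        moreover have "2 * cmod (x n) * cmod (y n) \<le> (cmod (x n))\<^sup>2 + (cmod (y n))\<^sup>2"
          by (rule sum_squares_bound)
        moreover have "norm (cmod (x n) * cmod (y n)) = cmod (x n) * cmod (y n)" by simp
        ultimately show ?thesis by linarith
      qed
    qed
  qed
qed

lemma ip_summable: "x \<in> l2 \<Longrightarrow> y \<in> l2 \<Longrightarrow> summable (\<lambda>n. cnj (x n) * y n)"
  by (rule summable_norm_cancel) (simp add: norm_mult l2_prod_summable)

lemma CS: "x \<in> l2 \<Longrightarrow> y \<in> l2 \<Longrightarrow>
    cmod (ip x y) \<le> sqrt (\<Sum>n. (cmod (x n))^2) * sqrt (\<Sum>n. (cmod (y n))^2)"
proof -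
  assume x: "x \<in> l2" and y: "y \<in> l2"
  have sx: "summable (\<lambda>n. (cmod (x n))^2)" and sy: "summable (\<lambda>n. (cmod (y n))^2)"
    using x y by (auto simp: l2_def)
  have "cmod (ip x y) \<le> (\<Sum>n. norm (cnj (x n) * y n))"
    unfolding ip_def by (rule summable_norm) (simp add: norm_mult l2_prod_summable x y)
  also have "\<dots> = (\<Sum>n. cmod (x n) * cmod (y n))" by (simp add: norm_mult)
  also have "\<dots> \<le> sqrt (\<Sum>n. (cmod (x n))^2) * sqrt (\<Sum>n. (cmod (y n))^2)"
  proof (rule suminf_le_const[OF l2_prod_summable[OF x y]])
    fix N
    have "(\<Sum>n<N. cmod (x n) * cmod (y n)) = (\<Sum>n<N. \<bar>cmod (x n)\<bar> * \<bar>cmod (y n)\<bar>)" by simp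
    also have "\<dots> \<le> L2_set (\<lambda>n. cmod (x n)) {..<N} * L2_set (\<lambda>n. cmod (y n)) {..<N}"
      by (rule L2_set_mult_ineq)
    also have "\<dots> \<le> sqrt (\<Sum>n. (cmod (x n))^2) * sqrt (\<Sum>n. (cmod (y n))^2)"
      unfolding L2_set_def
      by (intro mult_mono real_sqrt_le_mono sum_le_suminf sx sy) (auto intro: suminf_nonneg sx sy sum_nonneg)
    finally show "(\<Sum>n<N. cmod (x n) * cmod (y n)) \<le> sqrt (\<Sum>n. (cmod (x n))^2) * sqrt (\<Sum>n. (cmod (y n))^2)" .
  qed
  finally show ?thesis .
qed

lemma ip_diff2: "a \<in> l2 \<Longrightarrow> b \<in> l2 \<Longrightarrow> c \<in> l2 \<Longrightarrow> ip a b - ip a c = ip a (\<lambda>n. b n - c n)"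
  unfolding ip_def by (subst suminf_diff) (auto intro: ip_summable simp: right_diff_distrib)

lemma ip_cont2:
  assumes a: "a \<in> l2" and x: "x \<in> l2" and b: "\<And>j. b j \<in> l2"
    and lim: "(\<lambda>j. l2dist (b j) x) \<longlonglongrightarrow> 0"
  shows "(\<lambda>j. ip a (b j)) \<longlonglongrightarrow> ip a x"
proof -
  have "(\<lambda>j. ip a (b j) - ip a x) \<longlonglongrightarrow> 0"
  proof (rule Lim_null_comparison)
    show "\<forall>\<^sub>F j in sequentially. norm (ip a (b j) - ip a x) \<le> sqrt (\<Sum>n. (cmod (a n))^2) * l2dist (b j) x"
    proof (intro always_eventually allI)
      fix j
      have "norm (ip a (b j) - ip a x) = cmod (ip a (\<lambda>n. b j n - x n))"
        using ip_diff2[OF a b x] by simp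
      also have "\<dots> \<le> sqrt (\<Sum>n. (cmod (a n))^2) * sqrt (\<Sum>n. (cmod (b j n - x n))^2)"
        using CS[OF a l2_diff[OF b x]] by simp
      finally show "norm (ip a (b j) - ip a x) \<le> sqrt (\<Sum>n. (cmod (a n))^2) * l2dist (b j) x"
        by (simp add: l2dist_def)
    qed
    show "(\<lambda>j. sqrt (\<Sum>n. (cmod (a n))^2) * l2dist (b j) x) \<longlonglongrightarrow> 0"
      using tendsto_mult_right_zero[OF lim] by simp
  qed
  thus ?thesis by (simp add: LIM_zero_iff)
qed

lemma ip_cnj: "a \<in> l2 \<Longrightarrow> b \<in> l2 \<Longrightarrow> ip a b = cnj (ip b a)"
proof -
  assume a: "a \<in> l2" and b: "b \<in> l2"
  have "(\<lambda>n. cnj (b n) * a n) sums ip b a" unfolding ip_def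
    using ip_summable[OF b a] by (simp add: summable_sums)
  hence "(\<lambda>n. cnj (cnj (b n) * a n)) sums cnj (ip b a)" by (simp only: sums_cnj)
  hence "(\<lambda>n. cnj (a n) * b n) sums cnj (ip b a)" by (simp add: mult.commute)
  thus ?thesis unfolding ip_def by (simp add: sums_iff)
qed

lemma ip_cont1:
  assumes a: "a \<in> l2" and x: "x \<in> l2" and b: "\<And>j. b j \<in> l2"
    and lim: "(\<lambda>j. l2dist (b j) x) \<longlonglongrightarrow> 0"
  shows "(\<lambda>j. ip (b j) a) \<longlonglongrightarrow> ip x a"
proof -
  have "(\<lambda>j. cnj (ip a (b j))) \<longlonglongrightarrow> cnj (ip a x)"
    by (rule tendsto_cnj[OF ip_cont2[OF a x b lim]])
  moreover have "\<And>j. cnj (ip a (b j)) = ip (b j) a" using ip_cnj[OF b a] by simp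
  moreover have "cnj (ip a x) = ip x a" using ip_cnj[OF x a] by simp
  ultimately show ?thesis by simp
qed


lemma ip_cre: "u \<in> D0 \<Longrightarrow> ip (cre u) x = ip u (ann x)"
proof -
  assume u: "u \<in> D0"
  let ?g = "\<lambda>n. cnj (cre u n) * x n"
  have s: "summable ?g" by (rule D0_summable[OF D0_cre[OF u]])
  have "(\<Sum>n. ?g (Suc n)) = suminf ?g - ?g 0" by (rule suminf_split_head[OF s])
  moreover have "?g 0 = 0" by (simp add: cre_def)
  moreover have "(\<lambda>n. ?g (Suc n)) = (\<lambda>n. cnj (u n) * ann x n)"
    by (auto simp: cre_def ann_def)
  ultimately show ?thesis by (simp add: ip_def)
qed

lemma ip_ann: "u \<in> D0 \<Longrightarrow> ip (ann u) x = ip u (cre x)"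
proof -
  assume u: "u \<in> D0"
  let ?g = "\<lambda>n. cnj (u n) * cre x n"
  have s: "summable ?g" by (rule D0_summable[OF u])
  have "(\<Sum>n. ?g (Suc n)) = suminf ?g - ?g 0" by (rule suminf_split_head[OF s])
  moreover have "?g 0 = 0" by (simp add: cre_def)
  moreover have "(\<lambda>n. ?g (Suc n)) = (\<lambda>n. cnj (ann u n) * x n)"
    by (auto simp: cre_def ann_def)
  ultimately show ?thesis by (simp add: ip_def)
qed

lemma ip_cre_pow: "u \<in> D0 \<Longrightarrow> ip ((cre ^^ k) u) x = ip u ((ann ^^ k) x)"
proof (induction k arbitrary: x)
  case 0 then show ?case by simp
next
  case (Suc k)
  have "ip ((cre ^^ Suc k) u) x = ip (cre ((cre ^^ k) u)) x" by simp
  also have "\<dots> = ip ((cre ^^ k) u) (ann x)" by (rule ip_cre[OF D0_funpow[OF D0_cre Suc.prems]])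
  also have "\<dots> = ip u ((ann ^^ k) (ann x))" by (rule Suc.IH[OF Suc.prems])
  also have "\<dots> = ip u ((ann ^^ Suc k) x)" by (simp add: funpow_Suc_right del: funpow.simps)
  finally show ?case .
qed

lemma ip_ann_pow: "u \<in> D0 \<Longrightarrow> ip ((ann ^^ k) u) x = ip u ((cre ^^ k) x)"
proof (induction k arbitrary: x)
  case 0 then show ?case by simp
next
  case (Suc k)
  have "ip ((ann ^^ Suc k) u) x = ip (ann ((ann ^^ k) u)) x" by simp
  also have "\<dots> = ip ((ann ^^ k) u) (cre x)" by (rule ip_ann[OF D0_funpow[OF D0_ann Suc.prems]])
  also have "\<dots> = ip u ((cre ^^ k) (cre x))" by (rule Suc.IH[OF Suc.prems])
  also have "\<dots> = ip u ((cre ^^ Suc k) x)" by (simp add: funpow_Suc_right del: funpow.simps)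
  finally show ?case .
qed

lemma ip_lin_left:
  assumes "p \<in> D0" "q \<in> D0" "r \<in> D0"
  shows "ip (\<lambda>n. a * p n + b * q n + complex_of_real (c n) * r n) x
       = cnj a * ip p x + cnj b * ip q x + ip r (\<lambda>n. complex_of_real (c n) * x n)"
proof -
  have sp: "summable (\<lambda>n. cnj a * (cnj (p n) * x n))"
    by (rule summable_mult[OF D0_summable[OF assms(1)]])
  have sq: "summable (\<lambda>n. cnj b * (cnj (q n) * x n))"
    by (rule summable_mult[OF D0_summable[OF assms(2)]])
  have sr: "summable (\<lambda>n. cnj (r n) * (complex_of_real (c n) * x n))"
    by (rule D0_summable[OF assms(3)])
  have "ip (\<lambda>n. a * p n + b * q n + complex_of_real (c n) * r n) x
     = (\<Sum>n. cnj a * (cnj (p n) * x n) + cnj b * (cnj (q n) * x n) + cnj (r n) * (complex_of_real (c n) * x n))"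
    unfolding ip_def by (simp add: algebra_simps)
  also have "\<dots> = (\<Sum>n. cnj a * (cnj (p n) * x n)) + (\<Sum>n. cnj b * (cnj (q n) * x n)) + (\<Sum>n. cnj (r n) * (complex_of_real (c n) * x n))"
    by (simp add: suminf_add[OF summable_add[OF sp sq] sr, symmetric] suminf_add[OF sp sq, symmetric])
  also have "\<dots> = cnj a * ip p x + cnj b * ip q x + ip r (\<lambda>n. complex_of_real (c n) * x n)"
    unfolding ip_def by (simp add: suminf_mult D0_summable assms)
  finally show ?thesis .
qed

lemma ip_lin_right:
  assumes "u \<in> D0"
  shows "ip u (\<lambda>n. a * p n + b * q n + r n)
       = a * ip u p + b * ip u q + ip u r"
proof -
  have sp: "summable (\<lambda>n. a * (cnj (u n) * p n))"
    by (rule summable_mult[OF D0_summable[OF assms(1)]])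
  have sq: "summable (\<lambda>n. b * (cnj (u n) * q n))"
    by (rule summable_mult[OF D0_summable[OF assms(1)]])
  have sr: "summable (\<lambda>n. cnj (u n) * r n)"
    by (rule D0_summable[OF assms(1)])
  have "ip u (\<lambda>n. a * p n + b * q n + r n)
     = (\<Sum>n. a * (cnj (u n) * p n) + b * (cnj (u n) * q n) + cnj (u n) * r n)"
    unfolding ip_def by (simp add: algebra_simps)
  also have "\<dots> = (\<Sum>n. a * (cnj (u n) * p n)) + (\<Sum>n. b * (cnj (u n) * q n)) + (\<Sum>n. cnj (u n) * r n)"
    by (simp add: suminf_add[OF summable_add[OF sp sq] sr, symmetric] suminf_add[OF sp sq, symmetric])
  also have "\<dots> = a * ip u p + b * ip u q + ip u r"
    unfolding ip_def by (simp add: suminf_mult D0_summable assms)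
  finally show ?thesis .
qed

lemma ip_sym: "u \<in> D0 \<Longrightarrow> ip (opA k xi f u) x = ip u (opA k xi f x)"
proof -
  assume u: "u \<in> D0"
  have "ip (opA k xi f u) x = cnj xi * ip ((cre ^^ k) u) x + cnj (cnj xi) * ip ((ann ^^ k) u) x
      + ip u (\<lambda>n. complex_of_real (f n) * x n)"
    unfolding opA_def numop_def
    by (rule ip_lin_left) (auto intro: D0_funpow D0_cre D0_ann u)
  also have "\<dots> = cnj xi * ip u ((ann ^^ k) x) + xi * ip u ((cre ^^ k) x)
      + ip u (\<lambda>n. complex_of_real (f n) * x n)"
    by (simp add: ip_cre_pow ip_ann_pow u)
  also have "\<dots> = ip u (opA k xi f x)"
    unfolding opA_def numop_def by (subst ip_lin_right[OF u]) simp
  finally show ?thesis .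
qed

definition e :: "nat \<Rightarrow> nat \<Rightarrow> complex" where "e m = (\<lambda>n. if n = m then 1 else 0)"

lemma e_D0: "e m \<in> D0" unfolding e_def D0_def by simp

lemma ip_e: "ip (e m) w = w m"
proof -
  have "(\<lambda>n. cnj (e m n) * w n) = (\<lambda>n. if n = m then w n else 0)" by (auto simp: e_def)
  thus ?thesis unfolding ip_def using sums_single[of m w] by (simp add: sums_iff)
qed

lemma adj_opA:
  assumes "(y, z) \<in> graph_adjoint (graph_of D0 (opA k xi f))"
  shows "z = opA k xi f y"
proof
  fix m
  have "ip (opA k xi f (e m)) y = ip (e m) z"
    using assms e_D0[of m] by (auto simp: graph_adjoint_def graph_of_def)
  thus "z m = opA k xi f y m" by (simp add: ip_sym e_D0 ip_e)
qed

lemma l2dist_self: "l2dist x x = 0" by (simp add: l2dist_def)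

lemma G_sub_cl:
  assumes "\<And>u. u \<in> D0 \<Longrightarrow> T u \<in> l2"
  shows "graph_of D0 T \<subseteq> graph_closure (graph_of D0 T)"
proof
  fix p assume "p \<in> graph_of D0 T"
  then obtain u where p: "p = (u, T u)" "u \<in> D0" by (auto simp: graph_of_def)
  show "p \<in> graph_closure (graph_of D0 T)"
    unfolding graph_closure_def
    using p assms D0_l2 by (auto simp: l2dist_self graph_of_def intro!: exI[of _ "\<lambda>j. (u, T u)"])
qed

lemma cl_sub_adj:
  "graph_closure (graph_of D0 (opA k xi f)) \<subseteq> graph_adjoint (graph_of D0 (opA k xi f))"
proof
  fix p assume "p \<in> graph_closure (graph_of D0 (opA k xi f))"
  then obtain x y s where p: "p = (x, y)" and xy: "x \<in> l2" "y \<in> l2"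
    and sG: "\<And>j. s j \<in> graph_of D0 (opA k xi f)"
    and l1: "(\<lambda>j. l2dist (fst (s j)) x) \<longlonglongrightarrow> 0" and l2: "(\<lambda>j. l2dist (snd (s j)) y) \<longlonglongrightarrow> 0"
    unfolding graph_closure_def by blast
  have sD: "fst (s j) \<in> D0" and sA: "snd (s j) = opA k xi f (fst (s j))" for j
    using sG[of j] by (auto simp: graph_of_def)
  have "ip (opA k xi f u) x = ip u y" if u: "u \<in> D0" for u
  proof -
    have "(\<lambda>j. ip (opA k xi f u) (fst (s j))) \<longlonglongrightarrow> ip (opA k xi f u) x"
      by (rule ip_cont2[OF D0_l2[OF D0_opA[OF u]] xy(1) D0_l2[OF sD] l1])
    moreover have "(\<lambda>j. ip u (snd (s j))) \<longlonglongrightarrow> ip u y"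
      by (rule ip_cont2[OF D0_l2[OF u] xy(2) _ l2]) (simp add: sA D0_l2 D0_opA sD)
    moreover have "ip (opA k xi f u) (fst (s j)) = ip u (snd (s j))" for j
      by (simp add: sA ip_sym u)
    ultimately show ?thesis using LIMSEQ_unique by auto
  qed
  thus "p \<in> graph_adjoint (graph_of D0 (opA k xi f))"
    using p xy by (auto simp: graph_adjoint_def graph_of_def)
qed

lemma adj_cl:
  "graph_adjoint (graph_closure (graph_of D0 (opA k xi f))) = graph_adjoint (graph_of D0 (opA k xi f))"
proof
  show "graph_adjoint (graph_closure (graph_of D0 (opA k xi f))) \<subseteq> graph_adjoint (graph_of D0 (opA k xi f))"
    using G_sub_cl[of "opA k xi f"] D0_l2 D0_opA unfolding graph_adjoint_def by blast
next
  show "graph_adjoint (graph_of D0 (opA k xi f)) \<subseteq> graph_adjoint (graph_closure (graph_of D0 (opA k xi f)))"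
  proof
    fix q assume q: "q \<in> graph_adjoint (graph_of D0 (opA k xi f))"
    then obtain y z where qyz: "q = (y, z)" and yz: "y \<in> l2" "z \<in> l2"
      and adj: "\<And>u. u \<in> D0 \<Longrightarrow> ip (opA k xi f u) y = ip u z"
      by (auto simp: graph_adjoint_def graph_of_def)
    have "ip w y = ip x z" if xwc: "(x, w) \<in> graph_closure (graph_of D0 (opA k xi f))" for x w
    proof -
      obtain s where xw: "x \<in> l2" "w \<in> l2"
        and sG: "\<And>j. s j \<in> graph_of D0 (opA k xi f)"
        and l1: "(\<lambda>j. l2dist (fst (s j)) x) \<longlonglongrightarrow> 0" and l2: "(\<lambda>j. l2dist (snd (s j)) w) \<longlonglongrightarrow> 0"
        using xwc unfolding graph_closure_def by blast
      have sD: "fst (s j) \<in> D0" and sA: "snd (s j) = opA k xi f (fst (s j))" for j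
        using sG[of j] by (auto simp: graph_of_def)
      have "(\<lambda>j. ip (snd (s j)) y) \<longlonglongrightarrow> ip w y"
        by (rule ip_cont1[OF yz(1) xw(2) _ l2]) (simp add: sA D0_l2 D0_opA sD)
      moreover have "(\<lambda>j. ip (fst (s j)) z) \<longlonglongrightarrow> ip x z"
        by (rule ip_cont1[OF yz(2) xw(1) D0_l2[OF sD] l1])
      moreover have "ip (snd (s j)) y = ip (fst (s j)) z" for j
        by (simp add: sA adj sD)
      ultimately show ?thesis using LIMSEQ_unique by auto
    qed
    thus "q \<in> graph_adjoint (graph_closure (graph_of D0 (opA k xi f)))"
      using qyz yz by (auto simp: graph_adjoint_def)
  qed
qed


definition chi :: "real \<Rightarrow> nat \<Rightarrow> real" where
  "chi J n = min 1 (max 0 (2 - real n / J))"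

definition cut :: "real \<Rightarrow> (nat \<Rightarrow> complex) \<Rightarrow> (nat \<Rightarrow> complex)" where
  "cut J y = (\<lambda>n. complex_of_real (chi J n) * y n)"

lemma chi_ge0: "0 \<le> chi J n" and chi_le1: "chi J n \<le> 1"
  by (auto simp: chi_def)

lemma chi_one: "J > 0 \<Longrightarrow> real n \<le> J \<Longrightarrow> chi J n = 1"
  by (auto simp: chi_def field_simps)

lemma chi_zero: "J > 0 \<Longrightarrow> 2 * J \<le> real n \<Longrightarrow> chi J n = 0"
  by (auto simp: chi_def field_simps)

lemma cut_D0: "J > 0 \<Longrightarrow> cut J y \<in> D0"
proof -
  assume J: "J > 0"
  have "{n. cut J y n \<noteq> 0} \<subseteq> {..nat \<lceil>2 * J\<rceil>}"
  proof
    fix n assume "n \<in> {n. cut J y n \<noteq> 0}"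
    hence "chi J n \<noteq> 0" by (auto simp: cut_def)
    hence "real n < 2 * J" using chi_zero[OF J, of n] by linarith
    thus "n \<in> {..nat \<lceil>2 * J\<rceil>}" by (simp add: le_nat_iff) linarith
  qed
  thus ?thesis unfolding D0_def by (auto intro: finite_subset)
qed

lemma minmax_lip: "\<bar>min 1 (max 0 u) - min 1 (max 0 v)\<bar> \<le> \<bar>u - v\<bar>" for u v :: real
  by (auto simp: min_def max_def)

lemma chi_lip: "J > 0 \<Longrightarrow> \<bar>chi J a - chi J b\<bar> \<le> \<bar>real a - real b\<bar> / J"
proof -
  assume J: "J > 0"
  have "\<bar>chi J a - chi J b\<bar> \<le> \<bar>(2 - real a / J) - (2 - real b / J)\<bar>"
    unfolding chi_def by (rule minmax_lip)
  also have "\<dots> = \<bar>(real b - real a) / J\<bar>" by (simp add: diff_divide_distrib)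
  also have "\<dots> = \<bar>real a - real b\<bar> / J" using J by (simp add: abs_div abs_minus_commute)
  finally show ?thesis .
qed

lemma chi_W:
  assumes J: "J \<ge> 1" and ab: "real a \<le> real b + 2" "real b \<le> real a + 2"
  shows "\<bar>chi J a - chi J b\<bar> * (real a + real b) \<le> 12"
proof (cases "2 * J \<le> real a \<and> 2 * J \<le> real b")
  case True
  thus ?thesis using chi_zero[of J a] chi_zero[of J b] J by simp
next
  case False
  hence s: "real a + real b \<le> 4 * J + 2" using ab by linarith
  have l: "\<bar>chi J a - chi J b\<bar> \<le> 2 / J"
    using chi_lip[of J a b] J ab by (simp add: divide_right_mono abs_le_iff) (smt (verit) divide_right_mono)
  have "\<bar>chi J a - chi J b\<bar> * (real a + real b) \<le> (2 / J) * (4 * J + 2)"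
    by (rule mult_mono[OF l s]) (use J in auto)
  also have "\<dots> = 8 + 4 / J" using J by (simp add: field_simps)
  also have "\<dots> \<le> 12" using J by (simp add: field_simps)
  finally show ?thesis .
qed

lemma cmod_of_real_diff: "cmod (complex_of_real x - complex_of_real y) = \<bar>x - y\<bar>"
  by (metis norm_of_real of_real_diff)

lemma W_bound:
  assumes J: "J \<ge> 1" and ab: "real a \<le> real b + 2" "real b \<le> real a + 2"
    and w: "0 \<le> w" "w \<le> real a + real b"
  shows "cmod (complex_of_real w * complex_of_real (chi J a - chi J b) * c) \<le> 12 * cmod c"
proof -
  have "w * \<bar>chi J a - chi J b\<bar> \<le> (real a + real b) * \<bar>chi J a - chi J b\<bar>"
    by (rule mult_right_mono[OF w(2)]) simp
  also have "\<dots> \<le> 12" using chi_W[OF J ab] by (simp add: mult.commute)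
  finally have "w * \<bar>chi J a - chi J b\<bar> \<le> 12" .
  hence "w * \<bar>chi J a - chi J b\<bar> * cmod c \<le> 12 * cmod c" by (rule mult_right_mono) simp
  thus ?thesis using w by (simp add: norm_mult abs_of_nonneg cmod_of_real_diff)
qed

lemma cre1: "cre (cut J y) n - complex_of_real (chi J n) * cre y n
   = (if n = 0 then 0 else complex_of_real (sqrt (real n)) * complex_of_real (chi J (n - 1) - chi J n) * y (n - 1))"
  by (simp add: cre_def cut_def algebra_simps)

lemma cre2: "cre (cre (cut J y)) n - complex_of_real (chi J n) * cre (cre y) n
   = (if n < 2 then 0 else complex_of_real (sqrt (real n) * sqrt (real (n - 1))) * complex_of_real (chi J (n - 2) - chi J n) * y (n - 2))"
  by (simp add: cre_def cut_def algebra_simps diff_diff_add numeral_2_eq_2)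

lemma ann1: "ann (cut J y) n - complex_of_real (chi J n) * ann y n
   = complex_of_real (sqrt (real (n + 1))) * complex_of_real (chi J (n + 1) - chi J n) * y (n + 1)"
  by (simp add: ann_def cut_def algebra_simps)

lemma ann2: "ann (ann (cut J y)) n - complex_of_real (chi J n) * ann (ann y) n
   = complex_of_real (sqrt (real (n + 1)) * sqrt (real (n + 2))) * complex_of_real (chi J (n + 2) - chi J n) * y (n + 2)"
  by (simp add: ann_def cut_def algebra_simps numeral_2_eq_2)


lemma sqrt_le_self: "1 \<le> x \<Longrightarrow> sqrt x \<le> x"
proof -
  assume x: "1 \<le> x"
  hence s: "1 \<le> sqrt x" by simp
  have "sqrt x * 1 \<le> sqrt x * sqrt x" by (rule mult_left_mono[OF s]) (use s in simp)
  thus ?thesis using x by simp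
qed

lemma sqrt_prod_le: "0 \<le> a \<Longrightarrow> a \<le> b \<Longrightarrow> sqrt a * sqrt b \<le> b"
proof -
  assume "0 \<le> a" "a \<le> b"
  hence "sqrt a * sqrt b \<le> sqrt b * sqrt b" by (intro mult_right_mono) auto
  thus ?thesis using \<open>0 \<le> a\<close> \<open>a \<le> b\<close> by simp
qed

lemma R_bounds:
  assumes k: "k \<in> {1, 2}" and J: "J \<ge> 1"
  shows "cmod ((cre ^^ k) (cut J y) n - complex_of_real (chi J n) * (cre ^^ k) y n) \<le> 12 * cmod (y (n - k))"
    and "cmod ((ann ^^ k) (cut J y) n - complex_of_real (chi J n) * (ann ^^ k) y n) \<le> 12 * cmod (y (n + k))"
proof -
  consider "k = 1" | "k = 2" using k by auto
  hence "cmod ((cre ^^ k) (cut J y) n - complex_of_real (chi J n) * (cre ^^ k) y n) \<le> 12 * cmod (y (n - k))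
     \<and> cmod ((ann ^^ k) (cut J y) n - complex_of_real (chi J n) * (ann ^^ k) y n) \<le> 12 * cmod (y (n + k))"
  proof cases
    case 1
    have A: "cmod (cre (cut J y) n - complex_of_real (chi J n) * cre y n) \<le> 12 * cmod (y (n - 1))"
    proof (cases "n = 0")
      case True thus ?thesis by (simp add: cre1)
    next
      case False
      have "sqrt (real n) \<le> real n" using False by (intro sqrt_le_self) simp
      hence w: "sqrt (real n) \<le> real (n - 1) + real n" using False by simp
      show ?thesis unfolding cre1 using False
        by (simp only: if_False) (rule W_bound[OF J _ _ _ w]; use False in auto)
    qed
    have B: "cmod (ann (cut J y) n - complex_of_real (chi J n) * ann y n) \<le> 12 * cmod (y (n + 1))"
    proof -
      have "sqrt (real (n + 1)) \<le> real (n + 1)" by (intro sqrt_le_self) simp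
      hence w: "sqrt (real (n + 1)) \<le> real (n + 1) + real n" by simp
      show ?thesis unfolding ann1 by (rule W_bound[OF J _ _ _ w]) auto
    qed
    show ?thesis using A B 1 by simp
  next
    case 2
    have A: "cmod (cre (cre (cut J y)) n - complex_of_real (chi J n) * cre (cre y) n) \<le> 12 * cmod (y (n - 2))"
    proof (cases "n < 2")
      case True thus ?thesis by (simp add: cre2)
    next
      case False
      have "sqrt (real (n - 1)) * sqrt (real n) \<le> real n" using False by (intro sqrt_prod_le) auto
      hence w: "sqrt (real n) * sqrt (real (n - 1)) \<le> real (n - 2) + real n" by (simp add: mult.commute)
      show ?thesis unfolding cre2 using False
        by (simp only: if_False) (rule W_bound[OF J _ _ _ w]; use False in auto)
    qed
    have B: "cmod (ann (ann (cut J y)) n - complex_of_real (chi J n) * ann (ann y) n) \<le> 12 * cmod (y (n + 2))"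
    proof -
      have "sqrt (real (n + 1)) * sqrt (real (n + 2)) \<le> real (n + 2)" by (intro sqrt_prod_le) auto
      hence w: "sqrt (real (n + 1)) * sqrt (real (n + 2)) \<le> real (n + 2) + real n" by simp
      show ?thesis unfolding ann2 by (rule W_bound[OF J _ _ _ w]) auto
    qed
    show ?thesis using A B 2 by (simp add: numeral_2_eq_2)
  qed
  thus "cmod ((cre ^^ k) (cut J y) n - complex_of_real (chi J n) * (cre ^^ k) y n) \<le> 12 * cmod (y (n - k))"
    and "cmod ((ann ^^ k) (cut J y) n - complex_of_real (chi J n) * (ann ^^ k) y n) \<le> 12 * cmod (y (n + k))"
    by auto
qed

lemma R_zero:
  assumes k: "k \<in> {1, 2}" and J: "J \<ge> 1" and n: "real n + 2 \<le> J"
  shows "(cre ^^ k) (cut J y) n - complex_of_real (chi J n) * (cre ^^ k) y n = 0"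
    and "(ann ^^ k) (cut J y) n - complex_of_real (chi J n) * (ann ^^ k) y n = 0"
proof -
  have c: "chi J m = 1" if "real m \<le> real n + 2" for m
    using chi_one[of J m] J n that by simp
  consider "k = 1" | "k = 2" using k by auto
  hence "(cre ^^ k) (cut J y) n - complex_of_real (chi J n) * (cre ^^ k) y n = 0
     \<and> (ann ^^ k) (cut J y) n - complex_of_real (chi J n) * (ann ^^ k) y n = 0"
  proof cases
    case 1
    have "chi J (n - 1) = 1" by (rule c) (use of_nat_mono[OF diff_le_self[of n 1], where 'a=real] in linarith)
    hence "cre (cut J y) n - complex_of_real (chi J n) * cre y n = 0"
      "ann (cut J y) n - complex_of_real (chi J n) * ann y n = 0"
      using c[of n] c[of "n + 1"] by (subst cre1 ann1; simp)+
    thus ?thesis using 1 by simp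
  next
    case 2
    have "chi J (n - 2) = 1" by (rule c) (use of_nat_mono[OF diff_le_self[of n 2], where 'a=real] in linarith)
    hence "cre (cre (cut J y)) n - complex_of_real (chi J n) * cre (cre y) n = 0"
      "ann (ann (cut J y)) n - complex_of_real (chi J n) * ann (ann y) n = 0"
      using c[of n] c[of "n + 2"] by (subst cre2 ann2; simp)+
    thus ?thesis using 2 by (simp add: numeral_2_eq_2)
  qed
  thus "(cre ^^ k) (cut J y) n - complex_of_real (chi J n) * (cre ^^ k) y n = 0"
    and "(ann ^^ k) (cut J y) n - complex_of_real (chi J n) * (ann ^^ k) y n = 0" by auto
qed

lemma opA_cut: "opA k xi f (cut J y) n - opA k xi f y n
  = complex_of_real (chi J n - 1) * opA k xi f y n
    + xi * ((cre ^^ k) (cut J y) n - complex_of_real (chi J n) * (cre ^^ k) y n)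
    + cnj xi * ((ann ^^ k) (cut J y) n - complex_of_real (chi J n) * (ann ^^ k) y n)"
  by (simp add: opA_def numop_def cut_def algebra_simps)

lemma three_sq: "(p + q + r)^2 \<le> 3 * (p^2 + q^2 + r^2)" for p q r :: real
proof -
  have "0 \<le> (p - q)^2 + (q - r)^2 + (p - r)^2" by simp
  thus ?thesis by (simp add: power2_eq_square algebra_simps)
qed

lemma D_bound:
  assumes k: "k \<in> {1, 2}" and J: "J \<ge> 1"
  shows "(cmod (opA k xi f (cut J y) n - opA k xi f y n))^2
     \<le> 3 * ((cmod (opA k xi f y n))^2 + 144 * (cmod xi)^2 * ((cmod (y (n - k)))^2 + (cmod (y (n + k)))^2))"
proof -
  let ?z = "opA k xi f y n"
  let ?R1 = "(cre ^^ k) (cut J y) n - complex_of_real (chi J n) * (cre ^^ k) y n"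
  let ?R2 = "(ann ^^ k) (cut J y) n - complex_of_real (chi J n) * (ann ^^ k) y n"
  have c1: "cmod (complex_of_real (chi J n - 1)) \<le> 1"
    unfolding norm_of_real using chi_ge0[of J n] chi_le1[of J n] by auto
  have pa: "cmod (complex_of_real (chi J n - 1) * ?z) \<le> cmod ?z"
    unfolding norm_mult by (rule mult_left_le_one_le[OF norm_ge_zero norm_ge_zero c1])
  have pb: "cmod (xi * ?R1) \<le> cmod xi * (12 * cmod (y (n - k)))"
    unfolding norm_mult by (rule mult_left_mono[OF R_bounds(1)[OF k J]]) simp
  have pc: "cmod (cnj xi * ?R2) \<le> cmod xi * (12 * cmod (y (n + k)))"
    unfolding norm_mult complex_mod_cnj by (rule mult_left_mono[OF R_bounds(2)[OF k J]]) simp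
  have "cmod (opA k xi f (cut J y) n - ?z) \<le> cmod (complex_of_real (chi J n - 1) * ?z) + cmod (xi * ?R1) + cmod (cnj xi * ?R2)"
    unfolding opA_cut by (rule order_trans[OF norm_triangle_ineq add_right_mono[OF norm_triangle_ineq]])
  also have "\<dots> \<le> cmod ?z + cmod xi * (12 * cmod (y (n - k))) + cmod xi * (12 * cmod (y (n + k)))"
    using pa pb pc by linarith
  finally have t: "cmod (opA k xi f (cut J y) n - ?z) \<le> cmod ?z + cmod xi * (12 * cmod (y (n - k))) + cmod xi * (12 * cmod (y (n + k)))" .
  have "(cmod (opA k xi f (cut J y) n - ?z))^2 \<le> (cmod ?z + cmod xi * (12 * cmod (y (n - k))) + cmod xi * (12 * cmod (y (n + k))))^2"
    by (rule power_mono[OF t]) simp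
  also have "\<dots> \<le> 3 * ((cmod ?z)^2 + (cmod xi * (12 * cmod (y (n - k))))^2 + (cmod xi * (12 * cmod (y (n + k))))^2)"
    by (rule three_sq)
  also have "\<dots> = 3 * ((cmod ?z)^2 + 144 * (cmod xi)^2 * ((cmod (y (n - k)))^2 + (cmod (y (n + k)))^2))"
    by (simp add: power_mult_distrib algebra_simps)
  finally show ?thesis .
qed

lemma tail_lemma:
  fixes g :: "nat \<Rightarrow> nat \<Rightarrow> real"
  assumes h: "summable h" and g0: "\<And>j n. 0 \<le> g j n" and gh: "\<And>j n. g j n \<le> h n"
    and gz: "\<And>j n. n < j \<Longrightarrow> g j n = 0"
  shows "(\<lambda>j. sqrt (suminf (g j))) \<longlonglongrightarrow> 0"
proof -
  have gs: "summable (g j)" for j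
    by (rule summable_comparison_test[OF _ h]) (use g0 gh in auto)
  define T where "T j = suminf h - (\<Sum>i<j. h i)" for j
  have T0: "T \<longlonglongrightarrow> 0"
    unfolding T_def using tendsto_diff[OF tendsto_const[of "suminf h"] summable_LIMSEQ[OF h]] by simp
  have up: "suminf (g j) \<le> T j" for j
  proof -
    have "suminf (g j) = (\<Sum>n. g j (n + j)) + (\<Sum>i<j. g j i)"
      by (rule suminf_split_initial_segment[OF gs])
    also have "(\<Sum>i<j. g j i) = 0" by (simp add: gz)
    also have "(\<Sum>n. g j (n + j)) \<le> (\<Sum>n. h (n + j))"
      by (rule suminf_le) (use gh gs h in auto)
    also have "(\<Sum>n. h (n + j)) = T j"
      unfolding T_def using suminf_split_initial_segment[OF h, of j] by simp
    finally show ?thesis by simp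
  qed
  have lo: "0 \<le> suminf (g j)" for j by (rule suminf_nonneg[OF gs g0])
  have "(\<lambda>j. suminf (g j)) \<longlonglongrightarrow> 0"
    by (rule tendsto_sandwich[OF _ _ tendsto_const T0]) (use lo up in auto)
  thus ?thesis using tendsto_real_sqrt by fastforce
qed


lemma summable_shift_down: "summable (g :: nat \<Rightarrow> real) \<Longrightarrow> summable (\<lambda>n. g (n - d))"
  by (subst summable_iff_shift[symmetric, where k = d]) simp

lemma adj_sub_cl:
  assumes k: "k \<in> {1, 2}"
    and q: "(y, z) \<in> graph_adjoint (graph_of D0 (opA k xi f))"
  shows "(y, z) \<in> graph_closure (graph_of D0 (opA k xi f))"
proof -
  have yz: "y \<in> l2" "z \<in> l2" using q by (auto simp: graph_adjoint_def)
  have zA: "z = opA k xi f y" by (rule adj_opA[OF q])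
  define J where "J j = real j + 3" for j :: nat
  have J1: "J j \<ge> 1" and J0: "J j > 0" for j by (auto simp: J_def)
  define s where "s j = (cut (J j) y, opA k xi f (cut (J j) y))" for j
  have sG: "s j \<in> graph_of D0 (opA k xi f)" for j
    unfolding s_def graph_of_def using cut_D0[OF J0] by auto
  have ys: "summable (\<lambda>n. (cmod (y n))^2)" using yz by (simp add: l2_def)
  have zs: "summable (\<lambda>n. (cmod (opA k xi f y n))^2)" using yz zA by (simp add: l2_def)
  have l1: "(\<lambda>j. l2dist (fst (s j)) y) \<longlonglongrightarrow> 0"
    unfolding s_def l2dist_def fst_conv
  proof (rule tail_lemma[OF ys])
    fix j n
    show "0 \<le> (cmod (cut (J j) y n - y n))\<^sup>2" by simp
    have c1: "cmod (complex_of_real (chi (J j) n - 1)) \<le> 1"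
      unfolding norm_of_real using chi_ge0[of "J j" n] chi_le1[of "J j" n] by auto
    have e: "cut (J j) y n - y n = complex_of_real (chi (J j) n - 1) * y n"
      by (simp add: cut_def algebra_simps)
    have "cmod (cut (J j) y n - y n) \<le> cmod (y n)"
      unfolding e norm_mult by (rule mult_left_le_one_le[OF norm_ge_zero norm_ge_zero c1])
    thus "(cmod (cut (J j) y n - y n))\<^sup>2 \<le> (cmod (y n))\<^sup>2" by (rule power_mono) simp
    assume "n < j"
    hence "real n \<le> J j" by (simp add: J_def)
    hence "chi (J j) n = 1" by (rule chi_one[OF J0])
    thus "(cmod (cut (J j) y n - y n))\<^sup>2 = 0" by (simp add: cut_def)
  qed
  define S where "S n = (cmod (y (n - 1)))^2 + (cmod (y (n - 2)))^2 + (cmod (y (n + 1)))^2 + (cmod (y (n + 2)))^2" for n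
  have ys1: "summable (\<lambda>n. (cmod (y (n + 1)))^2)"
    using summable_iff_shift[where f="\<lambda>n. (cmod (y n))^2" and k=1] ys by simp
  have ys2: "summable (\<lambda>n. (cmod (y (n + 2)))^2)"
    using summable_iff_shift[where f="\<lambda>n. (cmod (y n))^2" and k=2] ys by simp
  have Ss: "summable S" unfolding S_def
    by (intro summable_add summable_shift_down ys ys1 ys2)
  have hs: "summable (\<lambda>n. 3 * ((cmod (opA k xi f y n))^2 + 144 * (cmod xi)^2 * S n))"
    by (intro summable_mult summable_add zs Ss)
  have Sk: "(cmod (y (n - k)))^2 + (cmod (y (n + k)))^2 \<le> S n" for n
    using k by (auto simp: S_def)
  have l2: "(\<lambda>j. l2dist (snd (s j)) z) \<longlonglongrightarrow> 0"
    unfolding s_def l2dist_def snd_conv zA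
  proof (rule tail_lemma[OF hs])
    fix j n
    show "0 \<le> (cmod (opA k xi f (cut (J j) y) n - opA k xi f y n))\<^sup>2" by simp
    have "(cmod (opA k xi f (cut (J j) y) n - opA k xi f y n))\<^sup>2
     \<le> 3 * ((cmod (opA k xi f y n))^2 + 144 * (cmod xi)^2 * ((cmod (y (n - k)))^2 + (cmod (y (n + k)))^2))"
      by (rule D_bound[OF k J1])
    also have "\<dots> \<le> 3 * ((cmod (opA k xi f y n))^2 + 144 * (cmod xi)^2 * S n)"
      using Sk[of n] by (intro mult_left_mono add_left_mono) auto
    finally show "(cmod (opA k xi f (cut (J j) y) n - opA k xi f y n))\<^sup>2 \<le> 3 * ((cmod (opA k xi f y n))^2 + 144 * (cmod xi)^2 * S n)" .
    assume "n < j"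
    hence n2: "real n + 2 \<le> J j" by (simp add: J_def)
    hence "real n \<le> J j" by simp
    hence "chi (J j) n = 1" by (rule chi_one[OF J0])
    thus "(cmod (opA k xi f (cut (J j) y) n - opA k xi f y n))\<^sup>2 = 0"
      unfolding opA_cut R_zero[OF k J1 n2] by simp
  qed
  show ?thesis unfolding graph_closure_def
    using yz sG l1 l2 by blast
qed

theorem proposition3p1:
  fixes k :: nat and xi :: complex and f :: "nat \<Rightarrow> real"
  assumes "k \<in> {1, 2}"
    and "\<And>n. f n \<ge> 0"
    and "\<exists>C > 0. \<forall>n. f n \<le> C * beta_k0 k n"
  shows "essentially_self_adjoint D0 (opA k xi f)"
proof -
  let ?G = "graph_of D0 (opA k xi f)"
  have eq: "graph_closure ?G = graph_adjoint ?G"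
  proof
    show "graph_closure ?G \<subseteq> graph_adjoint ?G" by (rule cl_sub_adj)
    show "graph_adjoint ?G \<subseteq> graph_closure ?G"
      using adj_sub_cl[OF assms(1)] by auto
  qed
  have sv: "single_valued_graph (graph_closure ?G)"
    unfolding single_valued_graph_def eq using adj_opA by blast
  have ad: "graph_adjoint (graph_closure ?G) = graph_closure ?G"
    by (simp only: adj_cl) (rule eq[symmetric])
  show ?thesis
    unfolding essentially_self_adjoint_def self_adjoint_graph_def
    using D0_l2 D0_opA sv ad by auto
qed

end
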